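(* Fix real $R_1,R_2\ge1$. For $Y>0$ let $\mathcal{D}_Y(N,R_1,R_2)=\bigcup_{\ell>Y}\mathcal{C}'_\ell(N,R_1,R_2)$, the union over primes $\ell>Y$. Then \[ \frac{\#\mathcal{D}_Y(N,R_1,R_2)}{N}=O\Big(\sum_{\ell>Y}\ell^{-4/3}+\frac{1}{\log N}\Big) \] for $N\ge 2$, with implied constant depending only on $R_1,R_2$.
   Context: $\mathcal{R}_{\mathbb{Z}^3}(N,R_1,R_2)=\{(a,b,c)\in\mathbb{Z}_{\ge1}^3:\ ab^{2/3}c<N,\ a/c\in[1,R_1],\ b\in[1,R_2]\}$. A triple $(a,b,c)$ of positive integers is $\ell$-carefree if $\ell^2\nmid ab$, $\ell^2\nmid bc$ and $\ell^2\nmid ca$. $\mathcal{C}'_\ell(N,R_1,R_2)$ is the set of triples in $\mathcal{R}_{\mathbb{Z}^3}(N,R_1,R_2)$ that are not $\ell$-carefree. Sums over $\ell$ are over primes. *)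

theory Defs
  imports "HOL-Analysis.Analysis" "HOL-Computational_Algebra.Primes"
begin

definition region3 :: "real \<Rightarrow> real \<Rightarrow> real \<Rightarrow> (nat \<times> nat \<times> nat) set" where
  "region3 N R1 R2 = {(a, b, c). a \<ge> 1 \<and> b \<ge> 1 \<and> c \<ge> 1 \<and>
      real a * real b powr (2/3) * real c < N \<and>
      1 \<le> real a / real c \<and> real a / real c \<le> R1 \<and>
      1 \<le> real b \<and> real b \<le> R2}"

definition carefree :: "nat \<Rightarrow> nat \<times> nat \<times> nat \<Rightarrow> bool" where
  "carefree l t = (case t of (a, b, c) \<Rightarrow>
      \<not> l^2 dvd a * b \<and> \<not> l^2 dvd b * c \<and> \<not> l^2 dvd c * a)"

definition notCarefree :: "nat \<Rightarrow> real \<Rightarrow> real \<Rightarrow> real \<Rightarrow> (nat \<times> nat \<times> nat) set" where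
  "notCarefree l N R1 R2 = {t \<in> region3 N R1 R2. \<not> carefree l t}"

definition bigPrimeBad :: "real \<Rightarrow> real \<Rightarrow> real \<Rightarrow> real \<Rightarrow> (nat \<times> nat \<times> nat) set" where
  "bigPrimeBad Y N R1 R2 = (\<Union>l \<in> {l. prime l \<and> real l > Y}. notCarefree l N R1 R2)"

end

theory Submission
  imports Defs
begin

lemma region_facts:
  assumes "(a,b,c) \<in> region3 N R1 R2" "R1 \<ge> 1"
  shows "1 \<le> a" "1 \<le> b" "1 \<le> c" "c \<le> a" "real a \<le> sqrt (R1*N)" "real c \<le> sqrt N" "real b \<le> R2"
proof -
  have h: "a \<ge> 1" "b \<ge> 1" "c \<ge> 1" "real a * real b powr (2/3) * real c < N"
    "1 \<le> real a / real c" "real a / real c \<le> R1" "real b \<le> R2"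
    using assms(1) unfolding region3_def by auto
  show "1 \<le> a" "1 \<le> b" "1 \<le> c" "real b \<le> R2" using h by auto
  have cpos: "real c > 0" using h by auto
  have ca: "real c \<le> real a" using h(5) cpos by (simp add: divide_simps)
  then show "c \<le> a" by simp
  have aR: "real a \<le> R1 * real c" using h(6) cpos by (simp add: divide_simps)
  have bp: "real b powr (2/3) \<ge> 1" using h(2) by (simp add: ge_one_powr_ge_zero)
  have "real a * real c \<le> real a * real b powr (2/3) * real c"
  proof -
    have "real a * real c * 1 \<le> real a * real c * real b powr (2/3)"
      using bp by (intro mult_left_mono) auto
    then show ?thesis by (simp add: algebra_simps)
  qed
  then have ac: "real a * real c < N" using h(4) by linarith
  have "real c * real c \<le> real a * real c" using ca cpos by (intro mult_right_mono) auto
  then have "(real c)^2 \<le> N" using ac by (simp add: power2_eq_square)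
  then show "real c \<le> sqrt N" using real_le_rsqrt by blast
  have "real a * real a \<le> real a * (R1 * real c)" using aR by (intro mult_left_mono) auto
  also have "\<dots> = R1 * (real a * real c)" by simp
  also have "\<dots> \<le> R1 * N" using ac assms(2) by (intro mult_left_mono) auto
  finally have "(real a)^2 \<le> R1 * N" by (simp add: power2_eq_square)
  then show "real a \<le> sqrt (R1*N)" using real_le_rsqrt by blast
qed

lemma card_mult_img:
  assumes "X \<ge> 0"
  shows "real (card ((\<lambda>k::nat. m*k) ` {1..nat \<lfloor>X\<rfloor>})) \<le> X"
proof -
  have "card ((\<lambda>k::nat. m*k) ` {1..nat \<lfloor>X\<rfloor>}) \<le> nat \<lfloor>X\<rfloor>"
    using card_image_le[of "{1..nat \<lfloor>X\<rfloor>}" "\<lambda>k. m*k"] by simp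
  then have "real (card ((\<lambda>k::nat. m*k) ` {1..nat \<lfloor>X\<rfloor>})) \<le> real (nat \<lfloor>X\<rfloor>)" by linarith
  also have "\<dots> \<le> X" using assms by linarith
  finally show ?thesis .
qed

lemma card_int:
  assumes "X \<ge> 0"
  shows "real (card {1..nat \<lfloor>X\<rfloor>}) \<le> X"
  using assms by simp

lemma mem_int:
  assumes "1 \<le> a" "real a \<le> X"
  shows "a \<in> {1..nat \<lfloor>X\<rfloor>}"
  using assms by (simp add: le_nat_floor)

lemma mem_mult:
  assumes "m > 0" "m dvd a" "1 \<le> a" "real a \<le> X"
  shows "a \<in> (\<lambda>k::nat. m*k) ` {1..nat \<lfloor>X / m\<rfloor>}"
proof -
  obtain k where k: "a = m*k" using assms(2) by blast
  have "k \<ge> 1" using k assms(3) by (cases k) auto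
  moreover have "real m * real k \<le> X" using k assms(4) by simp
  then have "real k \<le> X / m" using assms(1) by (simp add: field_simps)
  ultimately have "k \<in> {1..nat \<lfloor>X / m\<rfloor>}" by (intro mem_int) auto
  then show ?thesis using k by blast
qed

lemma box_bound:
  assumes "real (card A) \<le> x" "real (card B) \<le> y" "real (card C) \<le> z"
  shows "real (card (A \<times> B \<times> C)) \<le> x * y * z"
proof -
  have "real (card (A \<times> B \<times> C)) = real (card A) * real (card B) * real (card C)"
    by (simp add: card_cartesian_product)
  also have "\<dots> \<le> x * y * z" using assms
    by (intro mult_mono) (auto intro: mult_nonneg_nonneg order_trans[OF of_nat_0_le_iff])
  finally show ?thesis .
qed

lemma per_prime:
  fixes l :: nat
  assumes l: "prime l" "real l > R2" and R: "R1 \<ge> 1" "R2 \<ge> 1" and N: "N \<ge> 0"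
  shows "real (card (notCarefree l N R1 R2)) \<le> 3 * R1 * R2 * N / real l ^ 2"
    and "notCarefree l N R1 R2 \<noteq> {} \<Longrightarrow> real l \<le> sqrt (R1 * N)"
proof -
  define s where "s = sqrt (R1 * N)"
  define t where "t = sqrt N"
  define M where "M = (\<lambda>(m::nat) X. (\<lambda>k::nat. m*k) ` {1..nat \<lfloor>X / m\<rfloor>})"
  define B where "B = {1..nat \<lfloor>R2\<rfloor>}"
  define T1 where "T1 = M (l^2) s \<times> B \<times> {1..nat \<lfloor>t\<rfloor>}"
  define T2 where "T2 = {1..nat \<lfloor>s\<rfloor>} \<times> B \<times> M (l^2) t"
  define T3 where "T3 = M l s \<times> B \<times> M l t"
  have lpos: "l > 0" using l prime_gt_0_nat by blast
  have l2pos: "l^2 > 0" using lpos by simp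
  have s0: "s \<ge> 0" and t0: "t \<ge> 0" using R N unfolding s_def t_def by auto
  have sub: "notCarefree l N R1 R2 \<subseteq> T1 \<union> T2 \<union> T3"
  proof
    fix x assume x: "x \<in> notCarefree l N R1 R2"
    obtain a b c where abc: "x = (a,b,c)" by (cases x) auto
    have reg: "(a,b,c) \<in> region3 N R1 R2" and nc: "\<not> carefree l (a,b,c)"
      using x abc unfolding notCarefree_def by auto
    note f = region_facts[OF reg R(1)]
    have bB: "b \<in> B" unfolding B_def using f by (intro mem_int) auto
    have "b < l" using f(7) l(2) by simp
    then have nb: "\<not> l dvd b" using f(2) by (auto dest: dvd_imp_le)
    have cop: "coprime (l^2) b" using nb l(1) by (simp add: prime_imp_coprime)
    have cs: "real c \<le> s" using f(4) f(5) unfolding s_def by linarith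
    have aM: "l^2 dvd a \<Longrightarrow> a \<in> M (l^2) s" unfolding M_def s_def using f l2pos
      by (intro mem_mult) auto
    have cM: "l^2 dvd c \<Longrightarrow> c \<in> M (l^2) t" unfolding M_def t_def using f l2pos
      by (intro mem_mult) auto
    have aM1: "l dvd a \<Longrightarrow> a \<in> M l s" unfolding M_def s_def using f lpos
      by (intro mem_mult) auto
    have cM1: "l dvd c \<Longrightarrow> c \<in> M l t" unfolding M_def t_def using f lpos
      by (intro mem_mult) auto
    have ai: "a \<in> {1..nat \<lfloor>s\<rfloor>}" using f unfolding s_def by (intro mem_int) auto
    have ci: "c \<in> {1..nat \<lfloor>t\<rfloor>}" using f unfolding t_def by (intro mem_int) auto
    have "l^2 dvd a \<or> l^2 dvd c \<or> (l dvd a \<and> l dvd c)"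
    proof -
      have "l^2 dvd a * b \<or> l^2 dvd b * c \<or> l^2 dvd c * a" using nc unfolding carefree_def by auto
      moreover have "l^2 dvd a * b \<Longrightarrow> l^2 dvd a" using cop by (simp add: coprime_dvd_mult_left_iff)
      moreover have "l^2 dvd b * c \<Longrightarrow> l^2 dvd c" using cop by (simp add: coprime_dvd_mult_right_iff)
      moreover have "l^2 dvd c * a \<Longrightarrow> l^2 dvd a \<or> l^2 dvd c \<or> (l dvd a \<and> l dvd c)"
      proof -
        assume h: "l^2 dvd c * a"
        show ?thesis
        proof (cases "l dvd a")
          case False
          then have "coprime (l^2) a" using l(1) by (simp add: prime_imp_coprime)
          then show ?thesis using h by (simp add: coprime_dvd_mult_left_iff)
        next
          case True
          show ?thesis
          proof (cases "l dvd c")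
            case False
            then have "coprime (l^2) c" using l(1) by (simp add: prime_imp_coprime)
            then show ?thesis using h by (simp add: coprime_dvd_mult_right_iff)
          qed (use True in auto)
        qed
      qed
      ultimately show ?thesis by blast
    qed
    then show "x \<in> T1 \<union> T2 \<union> T3" unfolding T1_def T2_def T3_def abc
      using aM cM aM1 cM1 ai ci bB by blast
  qed
  have fin: "finite T1" "finite T2" "finite T3" unfolding T1_def T2_def T3_def M_def B_def by auto
  have key: "sqrt (R1 * N) * sqrt N \<le> R1 * N"
  proof -
    have "sqrt (R1 * N) * sqrt N = sqrt R1 * N" using N by (simp add: real_sqrt_mult)
    also have "\<dots> \<le> R1 * N"
    proof -
      have "R1 * 1 \<le> R1 * R1" using R by (intro mult_left_mono) auto
      then have "R1 \<le> R1^2" by (simp add: power2_eq_square)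
      then have "sqrt R1 \<le> sqrt (R1^2)" by (rule real_sqrt_le_mono)
      then have "sqrt R1 \<le> R1" using R by simp
      then show ?thesis using N by (intro mult_right_mono) auto
    qed
    finally show ?thesis .
  qed
  have cB: "real (card B) \<le> R2" unfolding B_def using R by (intro card_int) auto
  have lr: "real l > 0" using lpos by simp
  have cT1: "real (card T1) \<le> R1 * R2 * N / real l ^ 2"
  proof -
    have "real (card T1) \<le> (s / real (l^2)) * R2 * t" unfolding T1_def M_def
      using s0 t0 lr cB by (intro box_bound card_mult_img card_int) auto
    also have "\<dots> = R2 * (s * t) / real l ^ 2" by simp
    also have "\<dots> \<le> R2 * (R1 * N) / real l ^ 2" using key R unfolding s_def t_def
      by (intro divide_right_mono mult_left_mono) auto
    finally show ?thesis by (simp add: algebra_simps)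
  qed
  have cT2: "real (card T2) \<le> R1 * R2 * N / real l ^ 2"
  proof -
    have "real (card T2) \<le> s * R2 * (t / real (l^2))" unfolding T2_def M_def
      using s0 t0 lr cB by (intro box_bound card_mult_img card_int) auto
    also have "\<dots> = R2 * (s * t) / real l ^ 2" by simp
    also have "\<dots> \<le> R2 * (R1 * N) / real l ^ 2" using key R unfolding s_def t_def
      by (intro divide_right_mono mult_left_mono) auto
    finally show ?thesis by (simp add: algebra_simps)
  qed
  have cT3: "real (card T3) \<le> R1 * R2 * N / real l ^ 2"
  proof -
    have "real (card T3) \<le> (s / real l) * R2 * (t / real l)" unfolding T3_def M_def
      using s0 t0 lr cB by (intro box_bound card_mult_img card_int) auto
    also have "\<dots> = R2 * (s * t) / real l ^ 2" by (simp add: power2_eq_square)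
    also have "\<dots> \<le> R2 * (R1 * N) / real l ^ 2" using key R unfolding s_def t_def
      by (intro divide_right_mono mult_left_mono) auto
    finally show ?thesis by (simp add: algebra_simps)
  qed
  have "card (notCarefree l N R1 R2) \<le> card (T1 \<union> T2 \<union> T3)"
    using sub fin by (intro card_mono) auto
  also have "\<dots> \<le> card T1 + card T2 + card T3"
    by (metis add_le_mono card_Un_le le_refl order_trans)
  finally have "real (card (notCarefree l N R1 R2)) \<le> real (card T1) + real (card T2) + real (card T3)"
    by linarith
  then show "real (card (notCarefree l N R1 R2)) \<le> 3 * R1 * R2 * N / real l ^ 2"
    using cT1 cT2 cT3 by (simp add: field_simps)
  assume "notCarefree l N R1 R2 \<noteq> {}"
  then obtain a b c where x: "(a,b,c) \<in> notCarefree l N R1 R2" by auto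
  then have "(a,b,c) \<in> T1 \<union> T2 \<union> T3" using sub by blast
  then have "l dvd a \<or> l dvd c"
    unfolding T1_def T2_def T3_def M_def by (auto simp: power2_eq_square)
  moreover have reg: "(a,b,c) \<in> region3 N R1 R2" using x unfolding notCarefree_def by auto
  note f = region_facts[OF reg R(1)]
  ultimately have "l \<le> a" using f by (auto dest: dvd_imp_le)
  then show "real l \<le> sqrt (R1 * N)" using f(5) by linarith
qed

lemma region_card:
  assumes R: "R1 \<ge> 1" "R2 \<ge> 1" and N: "N \<ge> 0"
  shows "real (card (region3 N R1 R2)) \<le> R1 * R2 * N" and "finite (region3 N R1 R2)"
proof -
  define s where "s = sqrt (R1 * N)"
  define t where "t = sqrt N"
  define T where "T = {1..nat \<lfloor>s\<rfloor>} \<times> {1..nat \<lfloor>R2\<rfloor>} \<times> {1..nat \<lfloor>t\<rfloor>}"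
  have sub: "region3 N R1 R2 \<subseteq> T"
  proof
    fix x assume x: "x \<in> region3 N R1 R2"
    obtain a b c where abc: "x = (a,b,c)" by (cases x) auto
    note f = region_facts[OF x[unfolded abc] R(1)]
    show "x \<in> T" unfolding T_def abc s_def t_def using f by (auto intro!: le_nat_floor)
  qed
  have fin: "finite T" unfolding T_def by auto
  then show "finite (region3 N R1 R2)" using sub finite_subset by blast
  have key: "s * R2 * t \<le> R1 * R2 * N"
  proof -
    have "s * t = sqrt R1 * N" using N unfolding s_def t_def by (simp add: real_sqrt_mult)
    also have "\<dots> \<le> R1 * N"
    proof -
      have "R1 * 1 \<le> R1 * R1" using R by (intro mult_left_mono) auto
      then have "R1 \<le> R1^2" by (simp add: power2_eq_square)
      then have "sqrt R1 \<le> sqrt (R1^2)" by (rule real_sqrt_le_mono)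
      then have "sqrt R1 \<le> R1" using R by simp
      then show ?thesis using N by (intro mult_right_mono) auto
    qed
    finally have "R2 * (s * t) \<le> R2 * (R1 * N)" using R by (intro mult_left_mono) auto
    then show ?thesis by (simp add: algebra_simps)
  qed
  have "real (card T) \<le> s * R2 * t" unfolding T_def
    using R N unfolding s_def t_def by (intro box_bound card_int) auto
  moreover have "card (region3 N R1 R2) \<le> card T" using sub fin by (rule card_mono[rotated])
  ultimately show "real (card (region3 N R1 R2)) \<le> R1 * R2 * N" using key by linarith
qed

theorem mainTheorem9:
  fixes R1 R2 :: real
  assumes "R1 \<ge> 1" and "R2 \<ge> 1"
  shows "\<exists>C > 0. \<forall>N :: real. \<forall>Y :: real. N \<ge> 2 \<longrightarrow> Y > 0 \<longrightarrow>
     real (card (bigPrimeBad Y N R1 R2)) / N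
       \<le> C * ((\<Sum>\<^sub>\<infinity>l \<in> {l :: nat. prime l \<and> real l > Y}. real l powr (-4/3)) + 1 / ln N)"
proof -
  define f where "f = (\<lambda>l::nat. real l powr (-4/3))"
  have fnn: "\<And>l. f l \<ge> 0" unfolding f_def by simp
  have "summable f" unfolding f_def by (subst summable_real_powr_iff) simp
  then have sumU: "f summable_on UNIV" using fnn summable_on_UNIV_nonneg_real_iff by blast
  have sumA: "f summable_on A" for A using sumU by (rule summable_on_subset_banach) simp
  obtain p0 :: nat where p0: "prime p0" "p0 > nat \<lceil>R2\<rceil>" using bigger_prime by blast
  have p0R: "real p0 > R2" using p0(2) by linarith
  have p0pos: "p0 > 0" using p0 prime_gt_0_nat by blast
  define d where "d = f p0"
  have dpos: "d > 0" unfolding d_def f_def using p0pos by simp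
  define C where "C = R1 * R2 / d + 3 * R1 * R2"
  have Cpos: "C > 0" unfolding C_def using assms dpos by (intro add_pos_pos) auto
  have fin_le: "sum f I \<le> infsum f A" if "finite I" "I \<subseteq> A" for I A
  proof -
    have "sum f I = infsum f I" using that by simp
    also have "\<dots> \<le> infsum f A" using that sumA fnn by (intro infsum_mono_neutral) auto
    finally show ?thesis .
  qed
  show ?thesis
  proof (intro exI[of _ C] conjI allI impI Cpos)
    fix N Y :: real assume N: "N \<ge> 2" and Y: "Y > 0"
    define P where "P = {l :: nat. prime l \<and> real l > Y}"
    define S where "S = infsum f P"
    have S0: "S \<ge> 0" unfolding S_def using fnn by (intro infsum_nonneg) auto
    have bad_sub: "bigPrimeBad Y N R1 R2 \<subseteq> region3 N R1 R2"
      unfolding bigPrimeBad_def notCarefree_def by auto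
    have rfin: "finite (region3 N R1 R2)" using region_card assms N by auto
    have bad_le_reg: "real (card (bigPrimeBad Y N R1 R2)) \<le> R1 * R2 * N"
    proof -
      have "card (bigPrimeBad Y N R1 R2) \<le> card (region3 N R1 R2)"
        using bad_sub rfin by (rule card_mono[rotated])
      then show ?thesis using region_card(1)[OF assms] N by (smt (verit) of_nat_mono)
    qed
    have main: "real (card (bigPrimeBad Y N R1 R2)) \<le> C * S * N"
    proof (cases "Y < R2")
      case True
      then have "p0 \<in> P" unfolding P_def using p0 p0R by auto
      then have "sum f {p0} \<le> S" unfolding S_def by (intro fin_le) auto
      then have dS: "d \<le> S" unfolding d_def by simp
      have "R1 * R2 * N = (R1 * R2 / d) * d * N" using dpos by simp
      also have "\<dots> \<le> (R1 * R2 / d) * S * N" using dS dpos assms N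
        by (intro mult_right_mono mult_left_mono) auto
      also have "\<dots> \<le> C * S * N" unfolding C_def using S0 N assms
        by (intro mult_right_mono) (auto simp: algebra_simps)
      finally show ?thesis using bad_le_reg by linarith
    next
      case False
      define I where "I = {l :: nat. prime l \<and> real l > Y \<and> real l \<le> sqrt (R1 * N)}"
      have Ifin: "finite I"
      proof (rule finite_subset)
        show "I \<subseteq> {..nat \<lfloor>sqrt (R1 * N)\<rfloor>}" unfolding I_def by (auto simp: le_nat_floor)
      qed simp
      have lR: "real l > R2" if "l \<in> P" for l using that False unfolding P_def by auto
      have eq: "bigPrimeBad Y N R1 R2 = (\<Union>l\<in>I. notCarefree l N R1 R2)"
      proof
        show "bigPrimeBad Y N R1 R2 \<subseteq> (\<Union>l\<in>I. notCarefree l N R1 R2)"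
        proof
          fix x assume "x \<in> bigPrimeBad Y N R1 R2"
          then obtain l where l: "l \<in> P" "x \<in> notCarefree l N R1 R2"
            unfolding bigPrimeBad_def P_def by auto
          have "real l \<le> sqrt (R1 * N)"
            using per_prime(2)[of l R2 R1 N] l lR assms N unfolding P_def by auto
          then show "x \<in> (\<Union>l\<in>I. notCarefree l N R1 R2)" using l unfolding I_def P_def by auto
        qed
      qed (auto simp: bigPrimeBad_def I_def)
      have "card (bigPrimeBad Y N R1 R2) \<le> (\<Sum>l\<in>I. card (notCarefree l N R1 R2))"
        unfolding eq using Ifin by (rule card_UN_le)
      then have "real (card (bigPrimeBad Y N R1 R2)) \<le> (\<Sum>l\<in>I. real (card (notCarefree l N R1 R2)))"
        by (metis of_nat_mono of_nat_sum)
      also have "\<dots> \<le> (\<Sum>l\<in>I. 3 * R1 * R2 * N * f l)"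
      proof (rule sum_mono)
        fix l assume l: "l \<in> I"
        then have lP: "l \<in> P" unfolding I_def P_def by auto
        have l1: "real l \<ge> 1" using l unfolding I_def using prime_ge_1_nat by auto
        have "real (card (notCarefree l N R1 R2)) \<le> 3 * R1 * R2 * N / real l ^ 2"
          using per_prime(1)[of l R2 R1 N] lP lR assms N unfolding P_def by auto
        also have "\<dots> = 3 * R1 * R2 * N * real l powr (-2)"
          using l1 by (simp add: powr_minus powr_realpow divide_inverse)
        also have "\<dots> \<le> 3 * R1 * R2 * N * f l" unfolding f_def using l1 assms N
          by (intro mult_left_mono powr_mono) auto
        finally show "real (card (notCarefree l N R1 R2)) \<le> 3 * R1 * R2 * N * f l" .
      qed
      also have "\<dots> = 3 * R1 * R2 * N * sum f I" by (simp add: sum_distrib_left)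
      also have "\<dots> \<le> 3 * R1 * R2 * N * S" unfolding S_def using Ifin assms N
        by (intro mult_left_mono fin_le) (auto simp: I_def P_def)
      also have "\<dots> \<le> C * S * N" unfolding C_def using S0 N assms dpos
        by (simp add: algebra_simps)
      finally show ?thesis .
    qed
    have lnpos: "ln N > 0" using N by simp
    have "real (card (bigPrimeBad Y N R1 R2)) / N \<le> C * S"
      using main N by (simp add: divide_simps algebra_simps)
    also have "\<dots> \<le> C * (S + 1 / ln N)" using Cpos lnpos by (simp add: algebra_simps)
    finally show "real (card (bigPrimeBad Y N R1 R2)) / N
       \<le> C * ((\<Sum>\<^sub>\<infinity>l \<in> {l :: nat. prime l \<and> real l > Y}. real l powr (-4/3)) + 1 / ln N)"
      unfolding S_def P_def f_def .
  qed
qed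

end
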